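(* Assume $p_0,p_1>0$. For $t\in\mathbb{R}$ let $D_{n,-}(t)=\frac1{n_1}\sum_{j=1}^{n_1}I\big(\eta_1(X_{1,j})>\tfrac12+\tfrac{t}{2p_1}\big)-\frac1{n_0}\sum_{j=1}^{n_0}I\big(\eta_0(X_{0,j})\ge\tfrac12-\tfrac{t}{2p_0}\big)$ and $D_{n,+}(t)=\frac1{n_1}\sum_{j=1}^{n_1}I\big(\eta_1(X_{1,j})\ge\tfrac12+\tfrac{t}{2p_1}\big)-\frac1{n_0}\sum_{j=1}^{n_0}I\big(\eta_0(X_{0,j})>\tfrac12-\tfrac{t}{2p_0}\big)$. Then for every $t\in\mathbb{R}$ and $0<\epsilon\le\sqrt{(p_1\wedge p_0)/2}$, $$\max\Big\{P^{\otimes n}\big(|D_{n,+}(t)-D_+(t)|>\epsilon\big),\,P^{\otimes n}\big(|D_{n,-}(t)-D_-(t)|>\epsilon\big)\Big\}\le 8\exp\Big(-\frac{n(p_1\wedge p_0)\epsilon^2}{4}\Big).$$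
   Context: $(X,A,Y)$ is a random vector on $\mathbb{R}^d\times\{0,1\}\times\{0,1\}$ with law $P$; $p_a=P(A=a)$; $P_{X|A=a}$ the conditional law of $X$ given $A=a$; $\eta_a(x)=P(Y=1\mid A=a,X=x)$. $D_-(t)=P_{X|A=1}\big(\eta_1(X)>\tfrac12+\tfrac{t}{2p_1}\big)-P_{X|A=0}\big(\eta_0(X)\ge\tfrac12-\tfrac{t}{2p_0}\big)$ and $D_+(t)=P_{X|A=1}\big(\eta_1(X)\ge\tfrac12+\tfrac{t}{2p_1}\big)-P_{X|A=0}\big(\eta_0(X)>\tfrac12-\tfrac{t}{2p_0}\big)$. $\{(X_i,A_i,Y_i)\}_{i=1}^n$ is an i.i.d. sample from $P$, $n_a=\#\{i:A_i=a\}$, and $X_{a,1},\dots,X_{a,n_a}$ are the features of the observations with $A_i=a$; an empty average is interpreted as $0$. *)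

theory Defs
  imports "HOL-Probability.Probability"
begin

text \<open>An observation is a triple (X, A, Y) with X in R^d, A and Y in {0,1},
  where the value 1 is encoded as True and 0 as False.\<close>

type_synonym 'd obs = "(real ^ 'd) \<times> bool \<times> bool"

definition obs_space :: "('d::finite) obs measure" where
  "obs_space = borel \<Otimes>\<^sub>M (count_space UNIV \<Otimes>\<^sub>M count_space UNIV)"

definition pA :: "('d::finite) obs measure \<Rightarrow> bool \<Rightarrow> real" where
  "pA P a = measure P {z \<in> space P. fst (snd z) = a}"

definition condX :: "('d::finite) obs measure \<Rightarrow> bool \<Rightarrow> (real ^ 'd) set \<Rightarrow> real" where
  "condX P a S = measure P {z \<in> space P. fst (snd z) = a \<and> fst z \<in> S} / pA P a"

text \<open>eta a is a version of x \<mapsto> P(Y = 1 | A = a, X = x): measurable, and for all Borel B,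
  P(X \<in> B, A = a, Y = 1) = E[ eta a (X) ; X \<in> B, A = a ].\<close>
definition is_regression :: "('d::finite) obs measure \<Rightarrow> (bool \<Rightarrow> real ^ 'd \<Rightarrow> real) \<Rightarrow> bool" where
  "is_regression P \<eta> \<longleftrightarrow>
     (\<forall>a. \<eta> a \<in> borel_measurable borel \<and>
        (\<forall>B \<in> sets borel.
           set_integrable P {z \<in> space P. fst z \<in> B \<and> fst (snd z) = a} (\<lambda>z. \<eta> a (fst z)) \<and>
           measure P {z \<in> space P. fst z \<in> B \<and> fst (snd z) = a \<and> snd (snd z)}
             = (LINT z : {z \<in> space P. fst z \<in> B \<and> fst (snd z) = a} | P. \<eta> a (fst z))))"

definition D_minus :: "('d::finite) obs measure \<Rightarrow> (bool \<Rightarrow> real ^ 'd \<Rightarrow> real) \<Rightarrow> real \<Rightarrow> real" where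
  "D_minus P \<eta> t =
     condX P True {x. \<eta> True x > 1/2 + t / (2 * pA P True)}
   - condX P False {x. \<eta> False x \<ge> 1/2 - t / (2 * pA P False)}"

definition D_plus :: "('d::finite) obs measure \<Rightarrow> (bool \<Rightarrow> real ^ 'd \<Rightarrow> real) \<Rightarrow> real \<Rightarrow> real" where
  "D_plus P \<eta> t =
     condX P True {x. \<eta> True x \<ge> 1/2 + t / (2 * pA P True)}
   - condX P False {x. \<eta> False x > 1/2 - t / (2 * pA P False)}"

text \<open>Empirical frequency, among sample points i < n with A_i = a, of X_i \<in> S.
  An empty average is 0 (automatic, since x / 0 = 0).\<close>
definition emp_freq :: "nat \<Rightarrow> bool \<Rightarrow> (real ^ 'd) set \<Rightarrow> (nat \<Rightarrow> 'd obs) \<Rightarrow> real" where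
  "emp_freq n a S \<omega> =
     (\<Sum>i \<in> {i. i < n \<and> fst (snd (\<omega> i)) = a}. indicator S (fst (\<omega> i)))
     / real (card {i. i < n \<and> fst (snd (\<omega> i)) = a})"

definition Dn_minus :: "('d::finite) obs measure \<Rightarrow> (bool \<Rightarrow> real ^ 'd \<Rightarrow> real) \<Rightarrow> nat \<Rightarrow> real \<Rightarrow> (nat \<Rightarrow> 'd obs) \<Rightarrow> real" where
  "Dn_minus P \<eta> n t \<omega> =
     emp_freq n True {x. \<eta> True x > 1/2 + t / (2 * pA P True)} \<omega>
   - emp_freq n False {x. \<eta> False x \<ge> 1/2 - t / (2 * pA P False)} \<omega>"

definition Dn_plus :: "('d::finite) obs measure \<Rightarrow> (bool \<Rightarrow> real ^ 'd \<Rightarrow> real) \<Rightarrow> nat \<Rightarrow> real \<Rightarrow> (nat \<Rightarrow> 'd obs) \<Rightarrow> real" where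
  "Dn_plus P \<eta> n t \<omega> =
     emp_freq n True {x. \<eta> True x \<ge> 1/2 + t / (2 * pA P True)} \<omega>
   - emp_freq n False {x. \<eta> False x > 1/2 - t / (2 * pA P False)} \<omega>"

end

theory Submission
  imports Defs
begin

definition gfun :: "bool \<Rightarrow> (real^'d) set \<Rightarrow> real \<Rightarrow> real \<Rightarrow> real \<Rightarrow> ('d::finite) obs \<Rightarrow> real" where
 "gfun a S q \<sigma> \<delta> z = (if fst (snd z) = a then \<sigma> * (indicator S (fst z) - q) - \<delta> else 0)"

lemma gfun_meas[measurable]: assumes "S \<in> sets borel" shows "gfun a S q \<sigma> \<delta> \<in> borel_measurable obs_space"
  unfolding gfun_def obs_space_def using assms by measurable

lemma setA_meas: "{z \<in> space obs_space. fst (snd z) = a} \<in> sets obs_space"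
  unfolding obs_space_def by measurable
lemma setAS_meas: assumes "S \<in> sets borel" shows "{z \<in> space obs_space. fst (snd z) = a \<and> fst z \<in> S} \<in> sets obs_space"
  unfolding obs_space_def using assms by measurable

lemma integral_g:
  assumes P: "prob_space P" and sP: "sets P = sets obs_space" and S: "S \<in> sets borel"
    and pa: "pA P a > 0"
  shows "(\<integral>z. exp (l * gfun a S q \<sigma> \<delta> z) \<partial>P) =
     (1 - pA P a) + pA P a * (condX P a S * exp (l*(\<sigma>*(1-q)-\<delta>)) + (1 - condX P a S) * exp (l*(\<sigma>*(0-q)-\<delta>)))"
proof -
  interpret prob_space P by fact
  have sp: "space P = space obs_space" using sP by (rule sets_eq_imp_space_eq)
  define BA where "BA = {z \<in> space P. fst (snd z) = a}"
  define B0 where "B0 = space P - BA"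
  define B1 where "B1 = {z \<in> space P. fst (snd z) = a \<and> fst z \<in> S}"
  define B2 where "B2 = BA - B1"
  have mBA: "BA \<in> sets P" unfolding BA_def sp sP by (rule setA_meas)
  have mB1: "B1 \<in> sets P" unfolding B1_def sp sP by (rule setAS_meas[OF S])
  have mB0: "B0 \<in> sets P" using mBA unfolding B0_def by auto
  have mB2: "B2 \<in> sets P" using mBA mB1 unfolding B2_def by auto
  have pAe: "pA P a = measure P BA" unfolding pA_def BA_def ..
  have c: "condX P a S = measure P B1 / pA P a" unfolding condX_def B1_def ..
  have m1: "measure P B1 = pA P a * condX P a S" using c pa by simp
  have m0: "measure P B0 = 1 - pA P a" unfolding B0_def pAe using prob_compl[OF mBA] .
  have m2: "measure P B2 = pA P a - pA P a * condX P a S"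
  proof -
    have "measure P B2 = measure P BA - measure P B1"
      unfolding B2_def by (rule finite_measure_Diff) (use mBA mB1 in \<open>auto simp: B1_def BA_def\<close>)
    then show ?thesis using m1 pAe by simp
  qed
  define c1 where "c1 = exp (l*(\<sigma>*(1-q)-\<delta>))"
  define c2 where "c2 = exp (l*(\<sigma>*(0-q)-\<delta>))"
  have pw: "exp (l * gfun a S q \<sigma> \<delta> z) = indicator B0 z + c1 * indicator B1 z + c2 * indicator B2 z"
    if "z \<in> space P" for z
    using that by (auto simp: gfun_def B0_def B1_def B2_def BA_def c1_def c2_def indicator_def)
  have "(\<integral>z. exp (l * gfun a S q \<sigma> \<delta> z) \<partial>P) = (\<integral>z. indicator B0 z + c1 * indicator B1 z + c2 * indicator B2 z \<partial>P)"
    by (rule Bochner_Integration.integral_cong[OF refl pw])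
  also have "\<dots> = measure P B0 + c1 * measure P B1 + c2 * measure P B2"
  proof -
    have i: "integrable P (indicator B :: _ \<Rightarrow> real)" if "B \<in> sets P" for B
      using that by (intro integrable_real_indicator) (auto simp: less_top[symmetric])
    have s: "B \<inter> space P = B" if "B \<in> sets P" for B using that sets.sets_into_space by blast
    show ?thesis using i[OF mB0] i[OF mB1] i[OF mB2] s[OF mB0] s[OF mB1] s[OF mB2] by simp
  qed
  finally show ?thesis unfolding m0 m1 m2 c1_def c2_def by (simp add: algebra_simps)
qed

lemma bern:
  fixes q h :: real assumes "0 \<le> q" "q \<le> 1" "0 \<le> h"
  shows "q * exp (h*(1-q)) + (1-q) * exp (-h*q) \<le> exp (h\<^sup>2/8)"
proof -
  have pos: "0 < 1 + q * (exp h - 1)" using assms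
    by (smt (verit) mult_nonneg_nonneg one_le_exp_iff)
  have "-h*q + ln (1 + q * (exp h - 1)) \<le> h\<^sup>2/8"
    using Hoeffdings_lemma_aux[of h q] assms by simp
  hence "ln (1 + q * (exp h - 1)) \<le> h\<^sup>2/8 + h*q" by simp
  hence "1 + q * (exp h - 1) \<le> exp (h\<^sup>2/8 + h*q)" using pos
    by (metis exp_le_cancel_iff exp_ln)
  hence "exp (-h*q) * (1 + q * (exp h - 1)) \<le> exp (-h*q) * exp (h\<^sup>2/8 + h*q)"
    by (intro mult_left_mono) auto
  also have "\<dots> = exp (h\<^sup>2/8)" by (simp add: exp_add[symmetric])
  also have "exp (-h*q) * (1 + q * (exp h - 1)) = q * exp (h*(1-q)) + (1-q) * exp (-h*q)"
    by (simp add: algebra_simps exp_add[symmetric] exp_diff)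
  finally show ?thesis by simp
qed

lemma exp_neg_le: fixes x :: real assumes "0 \<le> x" "x \<le> 1" shows "exp (-x) \<le> 1 - x/2"
proof -
  have "1 + x \<le> exp x" by (rule exp_ge_add_one_self)
  hence "exp (-x) \<le> 1 / (1 + x)" using assms by (simp add: exp_minus field_simps)
  also have "\<dots> \<le> 1 - x/2" using assms by (simp add: field_simps) (smt (verit) mult_left_le_one_le)
  finally show ?thesis .
qed

lemma bracket:
  fixes c \<delta> \<sigma> :: real assumes "0 \<le> c" "c \<le> 1" "0 < \<delta>" "\<sigma> = 1 \<or> \<sigma> = -1"
  shows "c * exp ((4*\<delta>)*(\<sigma>*(1-c)-\<delta>)) + (1 - c) * exp ((4*\<delta>)*(\<sigma>*(0-c)-\<delta>)) \<le> exp (-2*\<delta>\<^sup>2)"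
  using assms(4)
proof
  assume s: "\<sigma> = 1"
  have "c * exp ((4*\<delta>)*(\<sigma>*(1-c)-\<delta>)) + (1 - c) * exp ((4*\<delta>)*(\<sigma>*(0-c)-\<delta>))
      = exp (-(4*\<delta>)*\<delta>) * (c * exp ((4*\<delta>)*(1-c)) + (1-c) * exp (-(4*\<delta>)*c))"
  proof -
    have e1: "(4*\<delta>)*(\<sigma>*(1-c)-\<delta>) = -(4*\<delta>)*\<delta> + (4*\<delta>)*(1-c)" using s by (simp add: algebra_simps)
    have e2: "(4*\<delta>)*(\<sigma>*(0-c)-\<delta>) = -(4*\<delta>)*\<delta> + -(4*\<delta>)*c" using s by (simp add: algebra_simps)
    show ?thesis unfolding e1 e2 exp_add by (simp add: algebra_simps)
  qed
  also have "\<dots> \<le> exp (-(4*\<delta>)*\<delta>) * exp ((4*\<delta>)\<^sup>2/8)"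
    using assms by (intro mult_left_mono bern) auto
  also have "\<dots> = exp (-2*\<delta>\<^sup>2)" by (simp add: exp_add[symmetric] power2_eq_square)
  finally show ?thesis .
next
  assume s: "\<sigma> = -1"
  have "c * exp ((4*\<delta>)*(\<sigma>*(1-c)-\<delta>)) + (1 - c) * exp ((4*\<delta>)*(\<sigma>*(0-c)-\<delta>))
      = exp (-(4*\<delta>)*\<delta>) * ((1-c) * exp ((4*\<delta>)*(1-(1-c))) + (1-(1-c)) * exp (-(4*\<delta>)*(1-c)))"
  proof -
    have e1: "(4*\<delta>)*(\<sigma>*(1-c)-\<delta>) = -(4*\<delta>)*\<delta> + -(4*\<delta>)*(1-c)" using s by (simp add: algebra_simps)
    have e2: "(4*\<delta>)*(\<sigma>*(0-c)-\<delta>) = -(4*\<delta>)*\<delta> + (4*\<delta>)*(1-(1-c))" using s by (simp add: algebra_simps)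
    show ?thesis unfolding e1 e2 exp_add by (simp add: algebra_simps)
  qed
  also have "\<dots> \<le> exp (-(4*\<delta>)*\<delta>) * exp ((4*\<delta>)\<^sup>2/8)"
    using assms by (intro mult_left_mono bern) auto
  also have "\<dots> = exp (-2*\<delta>\<^sup>2)" by (simp add: exp_add[symmetric] power2_eq_square)
  finally show ?thesis .
qed

lemma condX_bounds:
  assumes P: "prob_space P" and sP: "sets P = sets obs_space" and S: "S \<in> sets borel" and pa: "pA P a > 0"
  shows "0 \<le> condX P a S" "condX P a S \<le> 1"
proof -
  interpret prob_space P by fact
  have sp: "space P = space obs_space" using sP by (rule sets_eq_imp_space_eq)
  have mBA: "{z \<in> space P. fst (snd z) = a} \<in> sets P" unfolding sp sP by (rule setA_meas)
  have "measure P {z \<in> space P. fst (snd z) = a \<and> fst z \<in> S} \<le> measure P {z \<in> space P. fst (snd z) = a}"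
    by (rule finite_measure_mono[OF _ mBA]) auto
  thus "condX P a S \<le> 1" "0 \<le> condX P a S" using pa unfolding condX_def pA_def by auto
qed

lemma pA_le1: assumes "prob_space P" shows "pA P a \<le> 1"
  unfolding pA_def using prob_space.prob_le_1[OF assms] by blast

lemma tail:
  assumes P: "prob_space P" and sP: "sets P = sets obs_space" and S: "S \<in> sets borel"
    and pa: "pA P a > 0" and d: "0 < \<delta>" "2*\<delta>\<^sup>2 \<le> 1" and sg: "\<sigma> = 1 \<or> \<sigma> = -1"
  shows "measure (PiM {..<n} (\<lambda>_. P))
     {\<omega> \<in> space (PiM {..<n} (\<lambda>_. P)). 0 \<le> (\<Sum>i<n. gfun a S (condX P a S) \<sigma> \<delta> (\<omega> i))}
     \<le> exp (-(real n * pA P a * \<delta>\<^sup>2))"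
proof -
  interpret prob_space P by fact
  define M where "M = PiM {..<n} (\<lambda>_. P)"
  interpret M: prob_space M unfolding M_def by (rule prob_space_PiM) (rule P)
  interpret PS: product_sigma_finite "\<lambda>_. P"
    unfolding product_sigma_finite_def by (simp add: prob_space_imp_sigma_finite[OF P])
  define c where "c = condX P a S"
  define g where "g = gfun a S c \<sigma> \<delta>"
  define l where "l = 4 * \<delta>"
  define p where "p = pA P a"
  have c01: "0 \<le> c" "c \<le> 1" unfolding c_def using condX_bounds[OF P sP S pa] by auto
  have gm: "g \<in> borel_measurable P"
    using measurable_cong_sets[OF sP refl] gfun_meas[OF S] unfolding g_def by blast
  have gb: "\<bar>g z\<bar> \<le> 1 + \<delta>" for z
    using c01 sg d by (auto simp: g_def gfun_def indicator_def abs_if)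
  have ie: "integrable P (\<lambda>z. exp (l * g z))"
  proof (rule integrable_const_bound[where B="exp (l * (1 + \<delta>))"])
    show "AE x in P. norm (exp (l * g x)) \<le> exp (l * (1 + \<delta>))"
      using gb d by (auto simp: l_def abs_le_iff)
  qed (use gm in measurable)
  define u where "u = (\<lambda>\<omega>. \<Prod>i<n. exp (l * g (\<omega> i)))"
  have iu: "integrable M u" unfolding u_def M_def
    by (rule PS.product_integrable_prod) (use ie in auto)
  have set_eq: "{\<omega> \<in> space M. 0 \<le> (\<Sum>i<n. g (\<omega> i))} = {\<omega> \<in> space M. u \<omega> \<ge> 1}"
  proof -
    have "u \<omega> = exp (l * (\<Sum>i<n. g (\<omega> i)))" for \<omega>
      unfolding u_def by (simp add: exp_sum sum_distrib_left)
    moreover have "(1 \<le> exp (l * y)) = (0 \<le> y)" for y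
      using d by (simp add: l_def zero_le_mult_iff)
    ultimately show ?thesis by auto
  qed
  define E where "E = (\<integral>z. exp (l * g z) \<partial>P)"
  have E0: "0 \<le> E" unfolding E_def by (rule integral_nonneg_AE) auto
  have "E = (1 - p) + p * (c * exp (l*(\<sigma>*(1-c)-\<delta>)) + (1 - c) * exp (l*(\<sigma>*(0-c)-\<delta>)))"
    unfolding E_def g_def p_def c_def by (rule integral_g[OF P sP S pa])
  also have "\<dots> \<le> (1 - p) + p * exp (-2*\<delta>\<^sup>2)"
    using bracket[OF c01 d(1) sg] pa unfolding l_def p_def by (intro add_left_mono mult_left_mono) auto
  also have "\<dots> \<le> exp (- (p * \<delta>\<^sup>2))"
  proof -
    have "exp (-(2*\<delta>\<^sup>2)) \<le> 1 - (2*\<delta>\<^sup>2)/2" using d by (intro exp_neg_le) auto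
    hence "(1 - p) + p * exp (-2*\<delta>\<^sup>2) \<le> (1 - p) + p * (1 - \<delta>\<^sup>2)"
      using pa unfolding p_def by (intro add_left_mono mult_left_mono) auto
    also have "\<dots> = 1 + (- (p * \<delta>\<^sup>2))" by (simp add: algebra_simps)
    also have "\<dots> \<le> exp (- (p * \<delta>\<^sup>2))" by (rule exp_ge_add_one_self)
    finally show ?thesis .
  qed
  finally have Eb: "E \<le> exp (- (p * \<delta>\<^sup>2))" .
  have "measure M {\<omega> \<in> space M. u \<omega> \<ge> 1} \<le> (\<integral>\<omega>. u \<omega> \<partial>M) / 1"
    by (rule integral_Markov_inequality_measure[OF iu, where A="space M"]) (auto simp: u_def intro!: AE_I2 prod_nonneg)
  also have "(\<integral>\<omega>. u \<omega> \<partial>M) = (\<Prod>i<n. (\<integral>z. exp (l * g z) \<partial>P))"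
    unfolding u_def M_def by (rule PS.product_integral_prod) (use ie in auto)
  also have "\<dots> = E ^ n" by (simp add: E_def)
  also have "E ^ n / 1 \<le> exp (- (p * \<delta>\<^sup>2)) ^ n" using power_mono[OF Eb E0] by simp
  also have "\<dots> = exp (-(real n * p * \<delta>\<^sup>2))" by (simp add: exp_of_nat_mult[symmetric])
  finally show ?thesis using set_eq unfolding M_def g_def c_def p_def by simp
qed

lemma gsum:
  fixes \<omega> :: "nat \<Rightarrow> ('d::finite) obs"
  shows   "(\<Sum>i<n. gfun a S q \<sigma> \<delta> (\<omega> i)) =
    \<sigma> * ((\<Sum>i \<in> {i. i < n \<and> fst (snd (\<omega> i)) = a}. indicator S (fst (\<omega> i)))
          - q * real (card {i. i < n \<and> fst (snd (\<omega> i)) = a}))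
    - \<delta> * real (card {i. i < n \<and> fst (snd (\<omega> i)) = a})"
proof -
  have I: "{i. i < n \<and> fst (snd (\<omega> i)) = a} = {i \<in> {..<n}. fst (snd (\<omega> i)) = a}" by auto
  have "(\<Sum>i<n. gfun a S q \<sigma> \<delta> (\<omega> i)) =
     (\<Sum>i \<in> {i \<in> {..<n}. fst (snd (\<omega> i)) = a}. \<sigma> * (indicator S (fst (\<omega> i)) - q) - \<delta>)"
  proof -
    have "(\<Sum>i<n. gfun a S q \<sigma> \<delta> (\<omega> i)) = (\<Sum>i<n. if fst (snd (\<omega> i)) = a then \<sigma> * (indicator S (fst (\<omega> i)) - q) - \<delta> else 0)"
      by (simp add: gfun_def)
    also have "\<dots> = (\<Sum>i \<in> {i \<in> {..<n}. fst (snd (\<omega> i)) = a}. \<sigma> * (indicator S (fst (\<omega> i)) - q) - \<delta>)"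
      by (subst sum.inter_filter) auto
    finally show ?thesis .
  qed
  also have "\<dots> = \<sigma> * ((\<Sum>i \<in> {i \<in> {..<n}. fst (snd (\<omega> i)) = a}. indicator S (fst (\<omega> i)))
          - q * real (card {i \<in> {..<n}. fst (snd (\<omega> i)) = a}))
    - \<delta> * real (card {i \<in> {..<n}. fst (snd (\<omega> i)) = a})"
    by (simp add: sum_subtractf sum_distrib_left algebra_simps)
  finally show ?thesis unfolding I .
qed

lemma emp_incl:
  assumes "\<bar>emp_freq n a S \<omega> - q\<bar> > \<delta>" "\<delta> > 0"
  shows "0 \<le> (\<Sum>i<n. gfun a S q 1 \<delta> (\<omega> i)) \<or> 0 \<le> (\<Sum>i<n. gfun a S q (-1) \<delta> (\<omega> i))"
proof -
  define N where "N = real (card {i. i < n \<and> fst (snd (\<omega> i)) = a})"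
  define W where "W = (\<Sum>i \<in> {i. i < n \<and> fst (snd (\<omega> i)) = a}. indicator S (fst (\<omega> i)) :: real)"
  have e: "emp_freq n a S \<omega> = W / N" unfolding emp_freq_def W_def N_def ..
  show ?thesis
  proof (cases "N = 0")
    case True
    have fin: "finite {i. i < n \<and> fst (snd (\<omega> i)) = a}" by simp
    have emp: "{i. i < n \<and> fst (snd (\<omega> i)) = a} = {}" using True fin unfolding N_def by (simp only: of_nat_eq_0_iff card_eq_0_iff) simp
    have "W = 0" unfolding W_def emp by simp
    thus ?thesis unfolding gsum using True by (simp add: W_def[symmetric] N_def[symmetric])
  next
    case False
    have "N \<ge> 0" unfolding N_def by simp
    hence Np: "N > 0" using False by linarith
    have "\<bar>W / N - q\<bar> > \<delta>" using assms e by simp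
    moreover have "W / N - q = (W - q * N) / N" using Np by (simp add: field_simps)
    ultimately have "\<bar>W - q * N\<bar> / N > \<delta>" using Np by simp
    hence h: "\<bar>W - q * N\<bar> > \<delta> * N" using Np by (simp add: less_divide_eq)
    have s1: "(\<Sum>i<n. gfun a S q 1 \<delta> (\<omega> i)) = (W - q * N) - \<delta> * N"
      unfolding gsum W_def[symmetric] N_def[symmetric] by simp
    have s2: "(\<Sum>i<n. gfun a S q (-1) \<delta> (\<omega> i)) = -(W - q * N) - \<delta> * N"
      unfolding gsum W_def[symmetric] N_def[symmetric] by simp
    show ?thesis unfolding s1 s2 using h by linarith
  qed
qed

lemma dev_bound:
  assumes P: "prob_space P" and sP: "sets P = sets obs_space"
    and S1: "S1 \<in> sets borel" and S0: "S0 \<in> sets borel"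
    and p1: "pA P True > 0" and p0: "pA P False > 0" and e: "0 < \<epsilon>" "\<epsilon>\<^sup>2 \<le> 2"
  shows "measure (PiM {..<n} (\<lambda>_. P))
     {\<omega> \<in> space (PiM {..<n} (\<lambda>_. P)).
        \<bar>(emp_freq n True S1 \<omega> - emp_freq n False S0 \<omega>) - (condX P True S1 - condX P False S0)\<bar> > \<epsilon>}
     \<le> 4 * exp (- (real n * min (pA P True) (pA P False) * \<epsilon>^2) / 4)"
proof -
  define M where "M = PiM {..<n} (\<lambda>_. P)"
  interpret M: prob_space M unfolding M_def by (rule prob_space_PiM) (rule P)
  define \<delta> where "\<delta> = \<epsilon> / 2"
  have d: "0 < \<delta>" "2*\<delta>\<^sup>2 \<le> 1" using e by (auto simp: \<delta>_def power_divide)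
  define F where "F = (\<lambda>a S \<sigma>. {\<omega> \<in> space M. 0 \<le> (\<Sum>i<n. gfun a S (condX P a S) \<sigma> \<delta> (\<omega> i))})"
  have gm: "gfun a S q \<sigma> \<delta> \<in> borel_measurable P" if "S \<in> sets borel" for a S q \<sigma>
    using measurable_cong_sets[OF sP refl] gfun_meas[OF that] by blast
  have Fm: "F a S \<sigma> \<in> sets M" if "S \<in> sets borel" for a S \<sigma>
  proof -
    have [measurable]: "gfun a S (condX P a S) \<sigma> \<delta> \<in> borel_measurable P" by (rule gm[OF that])
    show ?thesis unfolding F_def M_def by measurable
  qed
  define m where "m = min (pA P True) (pA P False)"
  have Fb: "measure M (F a S \<sigma>) \<le> exp (- (real n * m * \<epsilon>^2) / 4)"
    if "S \<in> sets borel" "\<sigma> = 1 \<or> \<sigma> = -1" "pA P a > 0" "m \<le> pA P a" for a S \<sigma>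
  proof -
    have "measure M (F a S \<sigma>) \<le> exp (-(real n * pA P a * \<delta>\<^sup>2))"
      unfolding F_def M_def by (rule tail[OF P sP that(1) that(3) d that(2)])
    also have "\<dots> \<le> exp (- (real n * m * \<epsilon>^2) / 4)"
      using that(4) by (auto simp: \<delta>_def power_divide intro!: mult_right_mono mult_left_mono)
    finally show ?thesis .
  qed
  have m1: "m \<le> pA P True" and m0: "m \<le> pA P False" unfolding m_def by auto
  have sub: "{\<omega> \<in> space M.
        \<bar>(emp_freq n True S1 \<omega> - emp_freq n False S0 \<omega>) - (condX P True S1 - condX P False S0)\<bar> > \<epsilon>}
     \<subseteq> (F True S1 1 \<union> F True S1 (-1)) \<union> (F False S0 1 \<union> F False S0 (-1))"
  proof
    fix \<omega> assume "\<omega> \<in> {\<omega> \<in> space M.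
        \<bar>(emp_freq n True S1 \<omega> - emp_freq n False S0 \<omega>) - (condX P True S1 - condX P False S0)\<bar> > \<epsilon>}"
    hence w: "\<omega> \<in> space M"
      and h: "\<bar>(emp_freq n True S1 \<omega> - emp_freq n False S0 \<omega>) - (condX P True S1 - condX P False S0)\<bar> > \<epsilon>" by auto
    have "\<bar>emp_freq n True S1 \<omega> - condX P True S1\<bar> > \<delta> \<or> \<bar>emp_freq n False S0 \<omega> - condX P False S0\<bar> > \<delta>"
      using h unfolding \<delta>_def by linarith
    thus "\<omega> \<in> (F True S1 1 \<union> F True S1 (-1)) \<union> (F False S0 1 \<union> F False S0 (-1))"
      using emp_incl[of \<delta> n True S1 \<omega> "condX P True S1"] emp_incl[of \<delta> n False S0 \<omega> "condX P False S0"] d w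
      unfolding F_def by auto
  qed
  have "measure M {\<omega> \<in> space M.
        \<bar>(emp_freq n True S1 \<omega> - emp_freq n False S0 \<omega>) - (condX P True S1 - condX P False S0)\<bar> > \<epsilon>}
     \<le> measure M ((F True S1 1 \<union> F True S1 (-1)) \<union> (F False S0 1 \<union> F False S0 (-1)))"
    by (rule M.finite_measure_mono[OF sub]) (use Fm S1 S0 in auto)
  also have "\<dots> \<le> measure M (F True S1 1 \<union> F True S1 (-1)) + measure M (F False S0 1 \<union> F False S0 (-1))"
    by (rule measure_Un_le) (use Fm S1 S0 in auto)
  also have "\<dots> \<le> (measure M (F True S1 1) + measure M (F True S1 (-1))) + (measure M (F False S0 1) + measure M (F False S0 (-1)))"
    by (intro add_mono measure_Un_le) (use Fm S1 S0 in auto)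
  also have "\<dots> \<le> 4 * exp (- (real n * m * \<epsilon>^2) / 4)"
    using Fb[OF S1 _ p1 m1, of 1] Fb[OF S1 _ p1 m1, of "-1"] Fb[OF S0 _ p0 m0, of 1] Fb[OF S0 _ p0 m0, of "-1"]
    by simp
  finally show ?thesis unfolding M_def m_def .
qed

theorem lemmaC7:
  fixes P :: "('d::finite) obs measure" and \<eta> :: "bool \<Rightarrow> real ^ 'd \<Rightarrow> real"
    and n :: nat and t \<epsilon> :: real
  assumes "prob_space P"
    and "sets P = sets obs_space"
    and "is_regression P \<eta>"
    and "pA P False > 0" and "pA P True > 0"
    and "0 < \<epsilon>" and "\<epsilon> \<le> sqrt (min (pA P True) (pA P False) / 2)"
  shows "max (measure (PiM {..<n} (\<lambda>_. P))
                {\<omega> \<in> space (PiM {..<n} (\<lambda>_. P)). \<bar>Dn_plus P \<eta> n t \<omega> - D_plus P \<eta> t\<bar> > \<epsilon>})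
             (measure (PiM {..<n} (\<lambda>_. P))
                {\<omega> \<in> space (PiM {..<n} (\<lambda>_. P)). \<bar>Dn_minus P \<eta> n t \<omega> - D_minus P \<eta> t\<bar> > \<epsilon>})
         \<le> 8 * exp (- (real n * min (pA P True) (pA P False) * \<epsilon>^2) / 4)"
proof -
  note P = assms(1) and sP = assms(2)
  have em[measurable]: "\<eta> a \<in> borel_measurable borel" for a
    using assms(3) unfolding is_regression_def by blast
  have Sle: "{x. c \<le> \<eta> a x} \<in> sets borel" for a c
  proof -
    have "{x \<in> space borel. c \<le> \<eta> a x} \<in> sets borel" by measurable
    thus ?thesis by simp
  qed
  have Slt: "{x. c < \<eta> a x} \<in> sets borel" for a c
  proof -
    have "{x \<in> space borel. c < \<eta> a x} \<in> sets borel" by measurable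
    thus ?thesis by simp
  qed
  define m where "m = min (pA P True) (pA P False)"
  have m1: "m \<le> 1" unfolding m_def using pA_le1[OF P, of True] by auto
  have m0: "0 \<le> m" unfolding m_def using assms(4,5) by auto
  have "\<epsilon>\<^sup>2 \<le> (sqrt (m / 2))\<^sup>2" using assms(6,7) unfolding m_def by (intro power_mono) auto
  also have "\<dots> = m / 2" using m0 by simp
  finally have e2: "\<epsilon>\<^sup>2 \<le> 2" using m1 by simp
  have A: "measure (PiM {..<n} (\<lambda>_. P))
                {\<omega> \<in> space (PiM {..<n} (\<lambda>_. P)). \<bar>Dn_plus P \<eta> n t \<omega> - D_plus P \<eta> t\<bar> > \<epsilon>}
        \<le> 4 * exp (- (real n * min (pA P True) (pA P False) * \<epsilon>^2) / 4)"
    unfolding Dn_plus_def D_plus_def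
    by (rule dev_bound[OF P sP Sle Slt assms(5,4,6) e2])
  have B: "measure (PiM {..<n} (\<lambda>_. P))
                {\<omega> \<in> space (PiM {..<n} (\<lambda>_. P)). \<bar>Dn_minus P \<eta> n t \<omega> - D_minus P \<eta> t\<bar> > \<epsilon>}
        \<le> 4 * exp (- (real n * min (pA P True) (pA P False) * \<epsilon>^2) / 4)"
    unfolding Dn_minus_def D_minus_def
    by (rule dev_bound[OF P sP Slt Sle assms(5,4,6) e2])
  have X: "4 * exp (- (real n * min (pA P True) (pA P False) * \<epsilon>^2) / 4) \<le> 8 * exp (- (real n * min (pA P True) (pA P False) * \<epsilon>^2) / 4)"
    by simp
  show ?thesis by (rule max.boundedI; rule order.trans[OF _ X]) (fact A, fact B)
qed
end
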